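(* Let $a,b,c\ge 0$ and let $q:\mathbb R^M\to\mathbb R_+$ be a positive semidefinite quadratic form. Then the function $x\mapsto (a+b\,q(x))e^{-c\,q(x)}$ is log-concave on $\mathbb R^M$ whenever $ca\ge b$.
   Context: A function $f:\mathbb R^M\to\mathbb R_{\ge 0}$ is log-concave if $\log f$ is concave (with $\log 0=-\infty$). *)

theory Defs
  imports "HOL-Analysis.Analysis"
begin

text \<open>A function f : R^M -> R_{>=0} is log-concave if log f is concave, with log 0 = -infinity.
  Concavity of the extended-valued function log f means: for x, y where log f is finite
  (f x > 0, f y > 0) and 0 < t < 1, the value at the convex combination is finite
  and at least the convex combination of the values (points with value -infinity impose
  no constraint).\<close>
definition log_concave :: "('a::real_vector \<Rightarrow> real) \<Rightarrow> bool" where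
  "log_concave f \<longleftrightarrow>
     (\<forall>x. 0 \<le> f x) \<and>
     (\<forall>x y t. 0 < t \<longrightarrow> t < 1 \<longrightarrow> 0 < f x \<longrightarrow> 0 < f y \<longrightarrow>
        0 < f ((1 - t) *\<^sub>R x + t *\<^sub>R y) \<and>
        (1 - t) * ln (f x) + t * ln (f y) \<le> ln (f ((1 - t) *\<^sub>R x + t *\<^sub>R y)))"

end

theory Submission
  imports Defs
begin

lemma quad_convex:
  fixes A :: "real^'M^'M"
  assumes psd: "\<forall>x. 0 \<le> x \<bullet> (A *v x)" and t: "0 \<le> t" "t \<le> 1"
  shows "((1 - t) *\<^sub>R x + t *\<^sub>R y) \<bullet> (A *v ((1 - t) *\<^sub>R x + t *\<^sub>R y))
    \<le> (1 - t) * (x \<bullet> (A *v x)) + t * (y \<bullet> (A *v y))"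
proof -
  have e: "((1 - t) *\<^sub>R x + t *\<^sub>R y) \<bullet> (A *v ((1 - t) *\<^sub>R x + t *\<^sub>R y))
    = (1 - t) * (x \<bullet> (A *v x)) + t * (y \<bullet> (A *v y)) - t * (1 - t) * ((x - y) \<bullet> (A *v (x - y)))"
    by (simp add: algebra_simps inner_add_left inner_add_right inner_diff_left inner_diff_right power2_eq_square)
  have "0 \<le> t * (1 - t) * ((x - y) \<bullet> (A *v (x - y)))"
    using psd t by simp
  then show ?thesis using e by linarith
qed

theorem lemma1:
  fixes A :: "real^'M^'M" and a b c :: real
  assumes "a \<ge> 0" and "b \<ge> 0" and "c \<ge> 0"
    and psd: "\<forall>x. 0 \<le> x \<bullet> (A *v x)"
    and "c * a \<ge> b"
  shows "log_concave (\<lambda>x::real^'M. (a + b * (x \<bullet> (A *v x))) * exp (- c * (x \<bullet> (A *v x))))"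
proof (cases "a = 0")
  case True
  then have "b = 0" using assms by simp
  then show ?thesis using True unfolding log_concave_def by simp
next
  case False
  then have a: "a > 0" using assms by simp
  define Q where "Q = (\<lambda>x::real^'M. x \<bullet> (A *v x))"
  define g where "g = (\<lambda>s. ln (a + b * s) - c * s)"
  have Qnn: "\<And>x. 0 \<le> Q x" using psd Q_def by simp
  have pos: "\<And>s. 0 \<le> s \<Longrightarrow> 0 < a + b * s" using a assms by (simp add: add_pos_nonneg)
  have fpos: "\<And>x. 0 < (a + b * Q x) * exp (- c * Q x)" using pos Qnn by simp
  have lnf: "\<And>x. ln ((a + b * Q x) * exp (- c * Q x)) = g (Q x)"
  proof -
    fix x
    have "0 < a + b * Q x" using pos Qnn by blast
    then show "ln ((a + b * Q x) * exp (- c * Q x)) = g (Q x)"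
      by (simp add: g_def ln_mult)
  qed
  have gmono: "g s2 \<le> g s1" if "0 \<le> s1" "s1 \<le> s2" for s1 s2
  proof -
    have p1: "0 < a + b * s1" and p2: "0 < a + b * s2" using pos that by auto
    have "ln (a + b * s2) - ln (a + b * s1) = ln ((a + b * s2) / (a + b * s1))"
      using p1 p2 by (simp add: ln_div)
    also have "\<dots> \<le> (a + b * s2) / (a + b * s1) - 1"
      using p1 p2 by (intro ln_le_minus_one) simp
    also have "\<dots> = b * (s2 - s1) / (a + b * s1)" using p1 by (simp add: field_simps)
    also have "\<dots> \<le> b * (s2 - s1) / a"
      using p1 a that assms by (intro divide_left_mono) (auto intro: mult_pos_pos)
    also have "\<dots> \<le> c * (s2 - s1)"
    proof -
      have "b * (s2 - s1) \<le> (c * a) * (s2 - s1)" using assms that by (intro mult_right_mono) auto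
      then show ?thesis using a by (simp add: field_simps)
    qed
    finally show ?thesis unfolding g_def by (simp add: algebra_simps)
  qed
  have gconc: "(1 - t) * g s1 + t * g s2 \<le> g ((1 - t) * s1 + t * s2)"
    if "0 \<le> s1" "0 \<le> s2" "0 \<le> t" "t \<le> 1" for s1 s2 t
  proof -
    have "(1 - t) * ln (a + b * s1) + t * ln (a + b * s2)
       \<le> ln ((1 - t) *\<^sub>R (a + b * s1) + t *\<^sub>R (a + b * s2))"
      using concave_onD[OF ln_concave, of t "a + b * s1" "a + b * s2"] pos that by auto
    also have "(1 - t) *\<^sub>R (a + b * s1) + t *\<^sub>R (a + b * s2) = a + b * ((1 - t) * s1 + t * s2)"
      by (simp add: algebra_simps)
    finally show ?thesis unfolding g_def by (simp add: algebra_simps)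
  qed
  have "log_concave (\<lambda>x. (a + b * Q x) * exp (- c * Q x))"
    unfolding log_concave_def
  proof (intro conjI allI impI)
    fix x show "0 \<le> (a + b * Q x) * exp (- c * Q x)" using fpos less_imp_le by blast
  next
    fix x y :: "real^'M" and t :: real
    assume t: "0 < t" "t < 1"
    let ?z = "(1 - t) *\<^sub>R x + t *\<^sub>R y"
    show "0 < (a + b * Q ?z) * exp (- c * Q ?z)" by (rule fpos)
    have qc: "Q ?z \<le> (1 - t) * Q x + t * Q y"
      unfolding Q_def using quad_convex[OF psd, of t x y] t by simp
    have "(1 - t) * g (Q x) + t * g (Q y) \<le> g ((1 - t) * Q x + t * Q y)"
      using gconc Qnn t by simp
    also have "\<dots> \<le> g (Q ?z)" using gmono[OF Qnn qc] .
    finally show "(1 - t) * ln ((a + b * Q x) * exp (- c * Q x)) + t * ln ((a + b * Q y) * exp (- c * Q y))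
      \<le> ln ((a + b * Q ?z) * exp (- c * Q ?z))" unfolding lnf .
  qed
  then show ?thesis unfolding Q_def .
qed

end
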